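(* Let $\Gamma$ be a symmetric bimatrix game with strategy set $C_1$ and row-player utility $u_1$, and let $N\ge2$ be finite. Let $\Gamma^{N}$ be the $N$-player game in which every player has strategy set $C_1$ and player $i$ has utility $u_i^{N}(s_1,\dots,s_N)=\sum_{j\neq i}u_1(s_i,s_j)$. Then the symmetric correlated equilibria of $\Gamma^N$ (correlated equilibria of $\Gamma^N$ whose distribution on $C_1^N$ is invariant under all permutations of the players) are exactly the $N$-exchangeable equilibria of $\Gamma$.
   Context: A symmetric bimatrix game: two players with common finite strategy set $C_1$ and utilities with $u_1(s_1,s_2)=u_2(s_2,s_1)$. For a finite game with players $i$, a correlated equilibrium is a distribution $\pi$ on strategy profiles such that for every player $i$ and all $s_i,t_i$, $\sum_{s_{-i}}[u_i(t_i,s_{-i})-u_i(s)]\pi(s)\le0$. A distribution on $C_1^N$ is $N$-exchangeable if it is invariant under all permutations of the $N$ coordinates. An $N$-exchangeable equilibrium of $\Gamma$ is an $N$-exchangeable distribution of random variables $X_1,\dots,X_N$ such that the marginal distribution of $(X_1,X_2)$ is a correlated equilibrium of $\Gamma$. *)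

theory Defs
  imports "HOL-Combinatorics.Permutations" Complex_Main
begin

definition is_dist :: "'p set \<Rightarrow> ('p \<Rightarrow> real) \<Rightarrow> bool" where
  "is_dist S \<pi> \<longleftrightarrow> (\<forall>s\<in>S. \<pi> s \<ge> 0) \<and> sum \<pi> S = 1"

definition correlated_eq ::
  "'i set \<Rightarrow> ('i \<Rightarrow> 'a set) \<Rightarrow> ('i \<Rightarrow> ('i \<Rightarrow> 'a) \<Rightarrow> real) \<Rightarrow> (('i \<Rightarrow> 'a) \<Rightarrow> real) \<Rightarrow> bool" where
  "correlated_eq I Cs U \<pi> \<longleftrightarrow>
     is_dist (PiE I Cs) \<pi> \<and>
     (\<forall>i\<in>I. \<forall>si\<in>Cs i. \<forall>ti\<in>Cs i.
        (\<Sum>s\<in>{s\<in>PiE I Cs. s i = si}. (U i (s(i := ti)) - U i s) * \<pi> s) \<le> 0)"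

definition bimatrix_util :: "('a \<Rightarrow> 'a \<Rightarrow> real) \<Rightarrow> nat \<Rightarrow> (nat \<Rightarrow> 'a) \<Rightarrow> real" where
  "bimatrix_util u i s = (if i = 0 then u (s 0) (s 1) else u (s 1) (s 0))"

definition N_util :: "nat \<Rightarrow> ('a \<Rightarrow> 'a \<Rightarrow> real) \<Rightarrow> nat \<Rightarrow> (nat \<Rightarrow> 'a) \<Rightarrow> real" where
  "N_util N u i s = (\<Sum>j\<in>{..<N} - {i}. u (s i) (s j))"

definition exchangeable :: "nat \<Rightarrow> 'a set \<Rightarrow> ((nat \<Rightarrow> 'a) \<Rightarrow> real) \<Rightarrow> bool" where
  "exchangeable N C \<pi> \<longleftrightarrow>
     is_dist (PiE {..<N} (\<lambda>_. C)) \<pi> \<and>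
     (\<forall>\<sigma>. \<sigma> permutes {..<N} \<longrightarrow> (\<forall>s\<in>PiE {..<N} (\<lambda>_. C). \<pi> (s \<circ> \<sigma>) = \<pi> s))"

text \<open>Marginal of the first two coordinates (X_1, X_2), indexed 0 and 1.\<close>

definition marginal12 :: "nat \<Rightarrow> 'a set \<Rightarrow> ((nat \<Rightarrow> 'a) \<Rightarrow> real) \<Rightarrow> (nat \<Rightarrow> 'a) \<Rightarrow> real" where
  "marginal12 N C \<pi> x = (\<Sum>s\<in>{s\<in>PiE {..<N} (\<lambda>_. C). s 0 = x 0 \<and> s 1 = x 1}. \<pi> s)"

definition exchangeable_eq :: "nat \<Rightarrow> 'a set \<Rightarrow> ('a \<Rightarrow> 'a \<Rightarrow> real) \<Rightarrow> ((nat \<Rightarrow> 'a) \<Rightarrow> real) \<Rightarrow> bool" where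
  "exchangeable_eq N C u \<pi> \<longleftrightarrow>
     exchangeable N C \<pi> \<and>
     correlated_eq {0, 1} (\<lambda>_. C) (bimatrix_util u) (marginal12 N C \<pi>)"

definition symmetric_CE :: "nat \<Rightarrow> 'a set \<Rightarrow> ('a \<Rightarrow> 'a \<Rightarrow> real) \<Rightarrow> ((nat \<Rightarrow> 'a) \<Rightarrow> real) \<Rightarrow> bool" where
  "symmetric_CE N C u \<pi> \<longleftrightarrow>
     correlated_eq {..<N} (\<lambda>_. C) (N_util N u) \<pi> \<and>
     (\<forall>\<sigma>. \<sigma> permutes {..<N} \<longrightarrow> (\<forall>s\<in>PiE {..<N} (\<lambda>_. C). \<pi> (s \<circ> \<sigma>) = \<pi> s))"

end

theory Submission
  imports Defs
begin

lemma comp_perm_PiE: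
  assumes "\<sigma> permutes {..<N}" "s \<in> PiE {..<N} (\<lambda>_. C)"
  shows "s \<circ> \<sigma> \<in> PiE {..<N} (\<lambda>_. C)"
  proof -
  have "\<And>x. x < N \<Longrightarrow> \<sigma> x < N" using permutes_in_image[OF assms(1)] by auto
  then show ?thesis using assms by (auto simp: PiE_def extensional_def Pi_def permutes_not_in)
qed

lemma perm_sum:
  assumes inv: "\<forall>\<sigma>. \<sigma> permutes {..<N} \<longrightarrow> (\<forall>s\<in>PiE {..<N} (\<lambda>_. C). \<pi> (s \<circ> \<sigma>) = \<pi> s)"
    and sp: "\<sigma> permutes {..<N}"
  shows "(\<Sum>s\<in>PiE {..<N} (\<lambda>_. C). h (s i) (s j) * \<pi> s)
       = (\<Sum>s\<in>PiE {..<N} (\<lambda>_. C). h (s (\<sigma> i)) (s (\<sigma> j)) * \<pi> s)"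
proof (rule sum.reindex_bij_witness[where i="\<lambda>s. s \<circ> \<sigma>" and j="\<lambda>s. s \<circ> inv \<sigma>"])
  have ip: "inv \<sigma> permutes {..<N}" using sp by (rule permutes_inv)
  fix a assume a: "a \<in> PiE {..<N} (\<lambda>_. C)"
  show "a \<circ> inv \<sigma> \<circ> \<sigma> = a" using sp by (simp add: permutes_inverses(2) fun_eq_iff)
  show "a \<circ> \<sigma> \<circ> inv \<sigma> = a" using sp by (simp add: permutes_inverses(1) fun_eq_iff)
  show "a \<circ> \<sigma> \<in> PiE {..<N} (\<lambda>_. C)" by (rule comp_perm_PiE[OF sp a])
  show "a \<circ> inv \<sigma> \<in> PiE {..<N} (\<lambda>_. C)" by (rule comp_perm_PiE[OF ip a])
  have "\<pi> (a \<circ> inv \<sigma> \<circ> \<sigma>) = \<pi> (a \<circ> inv \<sigma>)"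
    using inv sp comp_perm_PiE[OF ip a] by blast
  then have "\<pi> (a \<circ> inv \<sigma>) = \<pi> a" using sp by (simp add: permutes_inv_o o_assoc[symmetric])
  then show "h ((a \<circ> inv \<sigma>) (\<sigma> i)) ((a \<circ> inv \<sigma>) (\<sigma> j)) * \<pi> (a \<circ> inv \<sigma>) = h (a i) (a j) * \<pi> a"
    using sp by (simp add: permutes_inverses(2))
qed

lemma pair_sum:
  assumes inv: "\<forall>\<sigma>. \<sigma> permutes {..<N} \<longrightarrow> (\<forall>s\<in>PiE {..<N} (\<lambda>_. C). \<pi> (s \<circ> \<sigma>) = \<pi> s)"
    and N: "(N::nat) \<ge> 2" and ij: "i < N" "j < N" "i \<noteq> j"
  shows "(\<Sum>s\<in>PiE {..<N} (\<lambda>_. C). h (s i) (s j) * \<pi> s)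
       = (\<Sum>s\<in>PiE {..<N} (\<lambda>_. C). h (s 0) (s 1) * \<pi> s)"
proof -
  define t1 where "t1 = transpose i 0"
  have p1: "t1 permutes {..<N}" unfolding t1_def using ij N by (intro permutes_swap_id) auto
  define k where "k = t1 j"
  have k0: "k \<noteq> 0" "k < N" using ij N by (auto simp: k_def t1_def transpose_def)
  have "t1 i = 0" by (simp add: t1_def)
  then have e1: "(\<Sum>s\<in>PiE {..<N} (\<lambda>_. C). h (s i) (s j) * \<pi> s)
       = (\<Sum>s\<in>PiE {..<N} (\<lambda>_. C). h (s 0) (s k) * \<pi> s)"
    using perm_sum[OF inv p1, of h i j] by (simp add: k_def)
  define t2 where "t2 = transpose k 1"
  have p2: "t2 permutes {..<N}" unfolding t2_def using k0 N by (intro permutes_swap_id) auto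
  have "t2 0 = 0" "t2 k = 1" using k0 by (auto simp: t2_def transpose_def)
  then have e2: "(\<Sum>s\<in>PiE {..<N} (\<lambda>_. C). h (s 0) (s k) * \<pi> s)
       = (\<Sum>s\<in>PiE {..<N} (\<lambda>_. C). h (s 0) (s 1) * \<pi> s)"
    using perm_sum[OF inv p2, of h 0 k] by simp
  show ?thesis using e1 e2 by simp
qed

lemma fiber_sum:
  assumes "finite C" "N \<ge> 2"
  shows "(\<Sum>x\<in>PiE {0,1} (\<lambda>_. C). g x * marginal12 N C \<pi> x)
       = (\<Sum>s\<in>PiE {..<N} (\<lambda>_. C). g (restrict s {0,1}) * \<pi> s)"
proof -
  let ?P = "PiE {..<N} (\<lambda>_. C)" and ?Q = "PiE {0::nat,1} (\<lambda>_. C)"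
  have fP: "finite ?P" using assms by (simp add: finite_PiE)
  have fQ: "finite ?Q" using assms by (simp add: finite_PiE)
  have sub: "(\<lambda>s. restrict s {0,1}) ` ?P \<subseteq> ?Q" using assms by (auto simp: PiE_def)
  have "(\<Sum>s\<in>?P. g (restrict s {0,1}) * \<pi> s)
      = (\<Sum>x\<in>?Q. \<Sum>s\<in>{s\<in>?P. restrict s {0,1} = x}. g (restrict s {0,1}) * \<pi> s)"
    by (rule sum.group[OF fP fQ sub, symmetric])
  also have "\<dots> = (\<Sum>x\<in>?Q. \<Sum>s\<in>{s\<in>?P. restrict s {0,1} = x}. g x * \<pi> s)"
    by (intro sum.cong refl) auto
  also have "\<dots> = (\<Sum>x\<in>?Q. g x * marginal12 N C \<pi> x)"
  proof (rule sum.cong[OF refl])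
    fix x assume x: "x \<in> ?Q"
    have "{s\<in>?P. restrict s {0,1} = x} = {s\<in>?P. s 0 = x 0 \<and> s 1 = x 1}"
    proof (intro set_eqI iffI)
      fix s assume "s \<in> {s\<in>?P. restrict s {0,1} = x}"
      then show "s \<in> {s\<in>?P. s 0 = x 0 \<and> s 1 = x 1}" by (auto simp: fun_eq_iff split: if_splits)
    next
      fix s assume "s \<in> {s\<in>?P. s 0 = x 0 \<and> s 1 = x 1}"
      then show "s \<in> {s\<in>?P. restrict s {0,1} = x}" using x
        by (auto simp: fun_eq_iff PiE_def extensional_def)
    qed
    then show "(\<Sum>s\<in>{s\<in>?P. restrict s {0,1} = x}. g x * \<pi> s) = g x * marginal12 N C \<pi> x"
      by (simp add: marginal12_def sum_distrib_left)
  qed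
  finally show ?thesis by simp
qed

lemma N_side:
  assumes inv: "\<forall>\<sigma>. \<sigma> permutes {..<N} \<longrightarrow> (\<forall>s\<in>PiE {..<N} (\<lambda>_. C). \<pi> (s \<circ> \<sigma>) = \<pi> s)"
    and N: "(N::nat) \<ge> 2" and i: "i < N" and fC: "finite C"
  shows "(\<Sum>s\<in>{s\<in>PiE {..<N} (\<lambda>_. C). s i = si}. (N_util N u i (s(i := ti)) - N_util N u i s) * \<pi> s)
       = real (N - 1) * (\<Sum>s\<in>PiE {..<N} (\<lambda>_. C).
            (if s 0 = si then u ti (s 1) - u si (s 1) else 0) * \<pi> s)"
proof -
  let ?P = "PiE {..<N} (\<lambda>_. C)"
  define h where "h = (\<lambda>a b. if a = si then u ti b - u si b else 0)"
  have "(\<Sum>s\<in>{s\<in>?P. s i = si}. (N_util N u i (s(i := ti)) - N_util N u i s) * \<pi> s)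
      = (\<Sum>s\<in>?P. if s i = si then (N_util N u i (s(i := ti)) - N_util N u i s) * \<pi> s else 0)"
    using fC by (simp add: sum.inter_filter finite_PiE)
  also have "\<dots> = (\<Sum>s\<in>?P. (\<Sum>j\<in>{..<N} - {i}. h (s i) (s j)) * \<pi> s)"
  proof (intro sum.cong refl)
    fix s
    have "N_util N u i (s(i := ti)) - N_util N u i s = (\<Sum>j\<in>{..<N} - {i}. u ti (s j) - u (s i) (s j))"
      unfolding N_util_def by (simp add: sum_subtractf)
    then show "(if s i = si then (N_util N u i (s(i := ti)) - N_util N u i s) * \<pi> s else 0)
      = (\<Sum>j\<in>{..<N} - {i}. h (s i) (s j)) * \<pi> s"
      by (simp add: h_def)
  qed
  also have "\<dots> = (\<Sum>j\<in>{..<N} - {i}. \<Sum>s\<in>?P. h (s i) (s j) * \<pi> s)"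
    unfolding sum_distrib_right by (rule sum.swap)
  also have "\<dots> = (\<Sum>j\<in>{..<N} - {i}. \<Sum>s\<in>?P. h (s 0) (s 1) * \<pi> s)"
    by (rule sum.cong[OF refl], rule pair_sum[OF inv N]) (use i in auto)
  also have "\<dots> = real (N - 1) * (\<Sum>s\<in>?P. h (s 0) (s 1) * \<pi> s)"
    using i by simp
  finally show ?thesis unfolding h_def .
qed

lemma M_side:
  assumes inv: "\<forall>\<sigma>. \<sigma> permutes {..<N} \<longrightarrow> (\<forall>s\<in>PiE {..<N} (\<lambda>_. C). \<pi> (s \<circ> \<sigma>) = \<pi> s)"
    and fC: "finite C" and N: "(N::nat) \<ge> 2" and i: "i \<in> {0::nat, 1}"
  shows "(\<Sum>x\<in>{x\<in>PiE {0,1} (\<lambda>_. C). x i = si}.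
            (bimatrix_util u i (x(i := ti)) - bimatrix_util u i x) * marginal12 N C \<pi> x)
       = (\<Sum>s\<in>PiE {..<N} (\<lambda>_. C).
            (if s 0 = si then u ti (s 1) - u si (s 1) else 0) * \<pi> s)"
proof -
  let ?P = "PiE {..<N} (\<lambda>_. C)" and ?Q = "PiE {0::nat,1} (\<lambda>_. C)"
  define h where "h = (\<lambda>a b. if a = si then u ti b - u si b else 0)"
  define k where "k = (if i = 0 then 1 else (0::nat))"
  have "(\<Sum>x\<in>{x\<in>?Q. x i = si}.
            (bimatrix_util u i (x(i := ti)) - bimatrix_util u i x) * marginal12 N C \<pi> x)
      = (\<Sum>x\<in>?Q. h (x i) (x k) * marginal12 N C \<pi> x)"
  proof -
    have fQ: "finite ?Q" using fC by (simp add: finite_PiE)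
    have "(\<Sum>x\<in>{x\<in>?Q. x i = si}.
            (bimatrix_util u i (x(i := ti)) - bimatrix_util u i x) * marginal12 N C \<pi> x)
      = (\<Sum>x\<in>?Q. if x i = si then (bimatrix_util u i (x(i := ti)) - bimatrix_util u i x) * marginal12 N C \<pi> x else 0)"
      by (rule sum.inter_filter[OF fQ])
    also have "\<dots> = (\<Sum>x\<in>?Q. h (x i) (x k) * marginal12 N C \<pi> x)"
    proof (rule sum.cong[OF refl])
      fix x
      show "(if x i = si then (bimatrix_util u i (x(i := ti)) - bimatrix_util u i x) * marginal12 N C \<pi> x else 0)
        = h (x i) (x k) * marginal12 N C \<pi> x"
        using i by (cases "i = 0") (simp_all add: h_def k_def bimatrix_util_def)
    qed
    finally show ?thesis .
  qed
  also have "\<dots> = (\<Sum>s\<in>?P. h (s i) (s k) * \<pi> s)"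
    using fiber_sum[OF fC N, of "\<lambda>x. h (x i) (x k)" \<pi>] i by (simp add: k_def)
  also have "\<dots> = (\<Sum>s\<in>?P. h (s 0) (s 1) * \<pi> s)"
    by (rule pair_sum[OF inv N]) (use i N in \<open>auto simp: k_def\<close>)
  finally show ?thesis unfolding h_def .
qed

theorem proposition4p10:
  fixes C :: "'a set" and u :: "'a \<Rightarrow> 'a \<Rightarrow> real" and N :: nat
    and \<pi> :: "(nat \<Rightarrow> 'a) \<Rightarrow> real"
  assumes "finite C" and "N \<ge> 2"
  shows "symmetric_CE N C u \<pi> \<longleftrightarrow> exchangeable_eq N C u \<pi>"
proof -
  let ?P = "PiE {..<N} (\<lambda>_. C)" and ?Q = "PiE {0::nat,1} (\<lambda>_. C)"
  define E where "E = (\<lambda>si ti. \<Sum>s\<in>?P. (if s 0 = si then u ti (s 1) - u si (s 1) else 0) * \<pi> s)"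
  have Npos: "real (N - 1) > 0" using assms by simp
  have dist: "is_dist ?Q (marginal12 N C \<pi>)" if d: "is_dist ?P \<pi>"
  proof -
    have "sum (marginal12 N C \<pi>) ?Q = (\<Sum>x\<in>?Q. 1 * marginal12 N C \<pi> x)" by simp
    also have "\<dots> = sum \<pi> ?P" using fiber_sum[OF assms, of "\<lambda>_. 1" \<pi>] by simp
    finally have "sum (marginal12 N C \<pi>) ?Q = 1" using d by (simp add: is_dist_def)
    moreover have "\<forall>x\<in>?Q. marginal12 N C \<pi> x \<ge> 0"
      using d unfolding is_dist_def marginal12_def by (auto intro: sum_nonneg)
    ultimately show ?thesis by (simp add: is_dist_def)
  qed
  show ?thesis
  proof
    assume H: "symmetric_CE N C u \<pi>"
    then have inv: "\<forall>\<sigma>. \<sigma> permutes {..<N} \<longrightarrow> (\<forall>s\<in>?P. \<pi> (s \<circ> \<sigma>) = \<pi> s)"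
      and d: "is_dist ?P \<pi>"
      and ce: "\<And>i si ti. i \<in> {..<N} \<Longrightarrow> si \<in> C \<Longrightarrow> ti \<in> C \<Longrightarrow>
        (\<Sum>s\<in>{s\<in>?P. s i = si}. (N_util N u i (s(i := ti)) - N_util N u i s) * \<pi> s) \<le> 0"
      unfolding symmetric_CE_def correlated_eq_def by auto
    have E: "E si ti \<le> 0" if "si \<in> C" "ti \<in> C" for si ti
    proof -
      have "real (N - 1) * E si ti \<le> 0"
        using ce[of 0 si ti] that assms N_side[OF inv assms(2) _ assms(1), where i=0 and si=si and ti=ti and u=u] by (simp add: E_def)
      then show ?thesis using Npos by (simp add: mult_le_0_iff)
    qed
    show "exchangeable_eq N C u \<pi>"
      unfolding exchangeable_eq_def exchangeable_def correlated_eq_def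
      using d inv dist[OF d] E M_side[OF inv assms] by (simp add: E_def)
  next
    assume H: "exchangeable_eq N C u \<pi>"
    then have inv: "\<forall>\<sigma>. \<sigma> permutes {..<N} \<longrightarrow> (\<forall>s\<in>?P. \<pi> (s \<circ> \<sigma>) = \<pi> s)"
      and d: "is_dist ?P \<pi>"
      and ce: "\<And>si ti. si \<in> C \<Longrightarrow> ti \<in> C \<Longrightarrow>
        (\<Sum>x\<in>{x\<in>?Q. x 0 = si}. (bimatrix_util u 0 (x(0 := ti)) - bimatrix_util u 0 x) * marginal12 N C \<pi> x) \<le> 0"
      unfolding exchangeable_eq_def exchangeable_def correlated_eq_def by auto
    have E: "E si ti \<le> 0" if "si \<in> C" "ti \<in> C" for si ti
      using ce[OF that] M_side[OF inv assms, where i=0 and si=si and ti=ti and u=u] by (simp add: E_def)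
    have "\<forall>i\<in>{..<N}. \<forall>si\<in>C. \<forall>ti\<in>C.
        (\<Sum>s\<in>{s\<in>?P. s i = si}. (N_util N u i (s(i := ti)) - N_util N u i s) * \<pi> s) \<le> 0"
    proof (intro ballI)
      fix i si ti assume "i \<in> {..<N}" "si \<in> C" "ti \<in> C"
      then show "(\<Sum>s\<in>{s\<in>?P. s i = si}. (N_util N u i (s(i := ti)) - N_util N u i s) * \<pi> s) \<le> 0"
        using N_side[OF inv assms(2) _ assms(1), where i=i and si=si and ti=ti and u=u] E[of si ti] Npos
        by (simp add: E_def mult_le_0_iff)
    qed
    then show "symmetric_CE N C u \<pi>"
      unfolding symmetric_CE_def correlated_eq_def using d inv by simp
  qed
qed

end
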